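(* Let $m\geq 3$ be an integer. For polynomials $x(s)$ and $y(s)$ with complex coefficients such that $x$ is monic of degree $m$ and $\deg y\leq m$, let $p(x,y)(s)=(s^4+2s^2)x(s)+y(s)$. Then \[ \inf\{\alpha(p(x,y)) : x \text{ monic of degree } m,\ \deg y\le m\} = -\infty . \]
   Context: For a polynomial $q$ with complex coefficients, its abscissa is $\alpha(q)=\max\{\Re z : q(z)=0\}$. *)

theory Defs
  imports "HOL-Computational_Algebra.Polynomial" "HOL-Library.Extended_Real"
begin

text \<open>Abscissa of a complex polynomial: the maximal real part of its roots.
  (Only meaningful for nonconstant polynomials.)\<close>
definition abscissa :: "complex poly \<Rightarrow> real" where
  "abscissa q = Max (Re ` {z. poly q z = 0})"

definition pxy :: "complex poly \<Rightarrow> complex poly \<Rightarrow> complex poly" where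
  "pxy x y = [:0, 0, 2, 0, 1:] * x + y"

end

theory Submission
  imports Defs
begin

lemma witness:
  fixes m :: nat and a :: real
  assumes "m \<ge> 3"
  shows "\<exists>x y. lead_coeff x = 1 \<and> degree x = m \<and> degree y \<le> m \<and>
           abscissa (pxy x y) = -a"
proof -
  define p :: "complex poly" where "p = [:complex_of_real a, 1:] ^ (m + 4)"
  define d :: "complex poly" where "d = [:0, 0, 2, 0, 1:]"
  define x where "x = p div d"
  define y where "y = p mod d"
  have dp: "degree p = m + 4" unfolding p_def by (simp add: degree_power_eq)
  have lp: "lead_coeff p = 1" unfolding p_def by (simp add: lead_coeff_power)
  have dd: "degree d = 4" "lead_coeff d = 1" "d \<noteq> 0" unfolding d_def by auto
  have pe: "p = d * x + y" unfolding x_def y_def by simp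
  have dy: "degree y < 4"
  proof (cases "y = 0")
    case True then show ?thesis by simp
  next
    case False then show ?thesis using degree_mod_less'[OF dd(3)] dd(1) unfolding y_def by auto
  qed
  have x0: "x \<noteq> 0"
  proof
    assume "x = 0"
    then have "p = y" using pe by simp
    then show False using dp dy by simp
  qed
  have ddx: "degree (d * x) = 4 + degree x" using dd x0 by (simp add: degree_mult_eq)
  have "degree p = degree (d * x)"
  proof -
    have "degree y < degree (d * x)" using dy ddx by simp
    then show ?thesis using pe degree_add_eq_left by metis
  qed
  then have dx: "degree x = m" using dp ddx by simp
  have "coeff p (m+4) = coeff (d*x) (m+4) + coeff y (m+4)" using pe by simp
  also have "coeff y (m+4) = 0" using dy by (intro coeff_eq_0) simp
  also have "coeff (d*x) (m+4) = lead_coeff (d*x)" using ddx dx by (simp add: add.commute)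
  also have "\<dots> = lead_coeff x" using dd by (simp add: lead_coeff_mult)
  finally have lx: "lead_coeff x = 1" using lp dp by simp
  have roots: "{z. poly p z = 0} = {- complex_of_real a}"
    unfolding p_def by (auto simp: algebra_simps add_eq_0_iff2)
  have "pxy x y = p" unfolding pxy_def using pe d_def by simp
  then have "abscissa (pxy x y) = -a" unfolding abscissa_def by (simp add: roots)
  then show ?thesis using lx dx dy assms by (intro exI[of _ x] exI[of _ y]) auto
qed

theorem mainTheorem2:
  fixes m :: nat
  assumes "m \<ge> 3"
  shows "(INF xy \<in> {(x, y). lead_coeff x = 1 \<and> degree x = m \<and> degree y \<le> m}.
            ereal (abscissa (pxy (fst xy) (snd xy)))) = -\<infinity>"
proof (rule ereal_bot)
  fix B :: real
  obtain x y where h: "lead_coeff x = 1" "degree x = m" "degree y \<le> m"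
    "abscissa (pxy x y) = B" using witness[OF assms, of "-B"] by auto
  have "(INF xy \<in> {(x, y). lead_coeff x = 1 \<and> degree x = m \<and> degree y \<le> m}.
            ereal (abscissa (pxy (fst xy) (snd xy)))) \<le> ereal (abscissa (pxy (fst (x,y)) (snd (x,y))))"
    by (rule INF_lower) (use h in auto)
  then show "(INF xy \<in> {(x, y). lead_coeff x = 1 \<and> degree x = m \<and> degree y \<le> m}.
            ereal (abscissa (pxy (fst xy) (snd xy)))) \<le> ereal B" using h by simp
qed

end
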